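(* Let $R$ be a ring such that every ideal generated by a strong parameter sequence on $R$ is unmixed. Then $R$ is Cohen-Macaulay.
   Context: All rings are commutative with identity. For an $R$-module $M$, a prime $P$ is weakly associated to $M$ if $P$ is minimal over $(0:_Rz)$ for some $z\in M$; $\operatorname{wAss}_R M$ is the set of such primes, and $\operatorname{Min}_R M$ denotes the set of minimal primes of the support of $M$. An ideal $I$ is unmixed if $\operatorname{wAss}_R R/I=\operatorname{Min}_R R/I$. For $x\in R$ let $C(x)$ be the complex $0\to R\to R_x\to 0$ ($R$ in degree $0$, natural localization map); for a finite sequence $\mathbf x=x_1,\dots,x_\ell$ put $C(\mathbf x)=C(x_1)\otimes_R\cdots\otimes_R C(x_\ell)$ and let $H^i_{\mathbf x}(M)$ be the $i$th cohomology of $C(\mathbf x)\otimes_R M$; $\ell(\mathbf x)=\ell$. Let $K(x)$ be $0\to R\xrightarrow{x}R\to 0$ (degrees $1,0$), $K(\mathbf x)=K(x_1)\otimes\cdots\otimes K(x_\ell)$, $H_i(\mathbf x)$ its homology. For $m\ge n$ the chain map $K(\mathbf x^m)\to K(\mathbf x^n)$ ($\mathbf x^m=x_1^m,\dots,x_\ell^m$) is the tensor product of the maps $K(x_i^m)\to K(x_i^n)$ given by multiplication by $x_i^{m-n}$ in degree $1$ and identity in degree $0$. $\mathbf x$ is weakly proregular if for every $n$ there is $m\ge n$ with $H_i(\mathbf x^m)\to H_i(\mathbf x^n)$ zero for all $i\ge1$. $\mathbf x$ is a parameter sequence on $R$ if it is weakly proregular, $(\mathbf x)R\neq R$, and $H^{\ell(\mathbf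 x)}_{\mathbf x}(R)_p\neq0$ for every prime $p\supseteq(\mathbf x)R$ (the empty sequence, generating the zero ideal, is a parameter sequence). It is a strong parameter sequence if $x_1,\dots,x_i$ is a parameter sequence for each $i=1,\dots,\ell(\mathbf x)$. A regular sequence on $M$: each $x_i$ is a non-zero-divisor on $M/(x_1,\dots,x_{i-1})M$ and $M\neq(\mathbf x)M$. A ring $R$ is Cohen-Macaulay if every strong parameter sequence on $R$ is a regular sequence on $R$. *)

theory Defs
  imports Main
begin

definition cr_ideal :: "'a::comm_ring_1 set \<Rightarrow> bool" where
  "cr_ideal I \<longleftrightarrow> 0 \<in> I \<and> (\<forall>x\<in>I. \<forall>y\<in>I. x + y \<in> I) \<and> (\<forall>r. \<forall>x\<in>I. r * x \<in> I)"

definition cr_prime_ideal :: "'a::comm_ring_1 set \<Rightarrow> bool" where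
  "cr_prime_ideal P \<longleftrightarrow> cr_ideal P \<and> P \<noteq> UNIV \<and> (\<forall>a b. a * b \<in> P \<longrightarrow> a \<in> P \<or> b \<in> P)"

definition ideal_gen :: "'a::comm_ring_1 list \<Rightarrow> 'a set" where
  "ideal_gen xs = {y. \<exists>c. y = (\<Sum>i<length xs. c i * xs ! i)}"

definition minimal_prime_over :: "'a::comm_ring_1 set \<Rightarrow> 'a set \<Rightarrow> bool" where
  "minimal_prime_over P J \<longleftrightarrow> cr_prime_ideal P \<and> J \<subseteq> P \<and>
     (\<forall>Q. cr_prime_ideal Q \<and> J \<subseteq> Q \<and> Q \<subseteq> P \<longrightarrow> Q = P)"

text \<open>Annihilator (0 :_R z) of the element z + I of R/I.\<close>
definition ann_quot :: "'a::comm_ring_1 set \<Rightarrow> 'a \<Rightarrow> 'a set" where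
  "ann_quot I z = {r. r * z \<in> I}"

definition wAss_quot :: "'a::comm_ring_1 set \<Rightarrow> 'a set set" where
  "wAss_quot I = {P. \<exists>z. minimal_prime_over P (ann_quot I z)}"

text \<open>Support of R/I: primes p with (R/I)_p nonzero, i.e. some element z + I
  is not killed by any s outside p.\<close>
definition Supp_quot :: "'a::comm_ring_1 set \<Rightarrow> 'a set set" where
  "Supp_quot I = {P. cr_prime_ideal P \<and> (\<exists>z. \<forall>s. s \<notin> P \<longrightarrow> s * z \<notin> I)}"

definition Min_quot :: "'a::comm_ring_1 set \<Rightarrow> 'a set set" where
  "Min_quot I = {P. P \<in> Supp_quot I \<and> (\<forall>Q\<in>Supp_quot I. Q \<subseteq> P \<longrightarrow> Q = P)}"

definition unmixed :: "'a::comm_ring_1 set \<Rightarrow> bool" where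
  "unmixed I \<longleftrightarrow> wAss_quot I = Min_quot I"

text \<open>K_i(x) is free on the i-element subsets S of {0..<l}; a chain is a coefficient
  function on index sets. Basis e_S = e_{j1} (x) ... (x) e_{ji}, j1 < ... < ji.\<close>
definition kchain :: "nat \<Rightarrow> nat \<Rightarrow> (nat set \<Rightarrow> 'a::comm_ring_1) \<Rightarrow> bool" where
  "kchain l i c \<longleftrightarrow> (\<forall>S. c S \<noteq> 0 \<longrightarrow> S \<subseteq> {..<l} \<and> card S = i)"

text \<open>Differential: d(e_T) = sum over j in T of (-1)^#{k in T. k<j} x_j e_(T - {j}).\<close>
definition koszul_d :: "'a::comm_ring_1 list \<Rightarrow> (nat set \<Rightarrow> 'a) \<Rightarrow> nat set \<Rightarrow> 'a" where
  "koszul_d xs c S = (if S \<subseteq> {..<length xs} then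
     (\<Sum>j\<in>{..<length xs} - S. (-1) ^ card {k\<in>S. k < j} * xs ! j * c (insert j S)) else 0)"

definition pow_seq :: "'a::comm_ring_1 list \<Rightarrow> nat \<Rightarrow> 'a list" where
  "pow_seq xs m = map (\<lambda>x. x ^ m) xs"

definition koszul_map :: "'a::comm_ring_1 list \<Rightarrow> nat \<Rightarrow> nat \<Rightarrow> (nat set \<Rightarrow> 'a) \<Rightarrow> nat set \<Rightarrow> 'a" where
  "koszul_map xs m n c S = (\<Prod>j\<in>S. (xs ! j) ^ (m - n)) * c S"

text \<open>The induced map H_i(x^m) -> H_i(x^n) is zero: every i-cycle maps to a boundary.\<close>
definition koszul_hom_map_zero :: "'a::comm_ring_1 list \<Rightarrow> nat \<Rightarrow> nat \<Rightarrow> nat \<Rightarrow> bool" where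
  "koszul_hom_map_zero xs m n i \<longleftrightarrow>
     (\<forall>c. kchain (length xs) i c \<and> koszul_d (pow_seq xs m) c = (\<lambda>_. 0) \<longrightarrow>
        (\<exists>w. kchain (length xs) (Suc i) w \<and> koszul_d (pow_seq xs n) w = koszul_map xs m n c))"

definition weakly_proregular :: "'a::comm_ring_1 list \<Rightarrow> bool" where
  "weakly_proregular xs \<longleftrightarrow>
     (\<forall>n\<ge>1. \<exists>m\<ge>n. \<forall>i\<ge>1. koszul_hom_map_zero xs m n i)"

text \<open>Elements of R_f are fractions a/f^k; a/f^k = b/f^j in R_f.\<close>
definition loc_eq :: "'a::comm_ring_1 \<Rightarrow> 'a \<Rightarrow> nat \<Rightarrow> 'a \<Rightarrow> nat \<Rightarrow> bool" where
  "loc_eq f a k b j \<longleftrightarrow> (\<exists>N. f ^ N * (a * f ^ j - b * f ^ k) = 0)"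

text \<open>The top term of C(x) is R_{x_1}(x)...(x)R_{x_l} = R_f with f = x_1...x_l, and the
  previous term is the sum over i of R_{g_i}, g_i = prod of x_j for j /= i; the element
  b/g_i^t maps to b x_i^t / f^t. H^l_x(R) = R_f / image. This predicate says that
  a/f^k lies in that image (i.e. is zero in H^l_x(R)).\<close>
definition cech_top_boundary :: "'a::comm_ring_1 list \<Rightarrow> 'a \<Rightarrow> nat \<Rightarrow> bool" where
  "cech_top_boundary xs a k \<longleftrightarrow>
     (\<exists>b t. loc_eq (prod_list xs) a k (\<Sum>i<length xs. b i * (xs ! i) ^ t) t)"

text \<open>H^l_x(R)_p \<noteq> 0: some class of H^l_x(R) is not annihilated by any s outside p.\<close>
definition cech_top_loc_nonzero :: "'a::comm_ring_1 list \<Rightarrow> 'a set \<Rightarrow> bool" where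
  "cech_top_loc_nonzero xs P \<longleftrightarrow>
     (\<exists>a k. \<forall>s. s \<notin> P \<longrightarrow> \<not> cech_top_boundary xs (s * a) k)"

definition parameter_seq :: "'a::comm_ring_1 list \<Rightarrow> bool" where
  "parameter_seq xs \<longleftrightarrow> weakly_proregular xs \<and> ideal_gen xs \<noteq> UNIV \<and>
     (\<forall>P. cr_prime_ideal P \<and> ideal_gen xs \<subseteq> P \<longrightarrow> cech_top_loc_nonzero xs P)"

definition strong_parameter_seq :: "'a::comm_ring_1 list \<Rightarrow> bool" where
  "strong_parameter_seq xs \<longleftrightarrow> (\<forall>i\<in>{1..length xs}. parameter_seq (take i xs))"

definition regular_seq :: "'a::comm_ring_1 list \<Rightarrow> bool" where
  "regular_seq xs \<longleftrightarrow>
     (\<forall>i<length xs. \<forall>r. xs ! i * r \<in> ideal_gen (take i xs) \<longrightarrow> r \<in> ideal_gen (take i xs))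
     \<and> ideal_gen xs \<noteq> UNIV"

definition cohen_macaulay :: "'a::comm_ring_1 itself \<Rightarrow> bool" where
  "cohen_macaulay _ \<longleftrightarrow> (\<forall>xs::'a list. strong_parameter_seq xs \<longrightarrow> regular_seq xs)"

end

theory Submission imports Defs begin

lemma prod_list_nth: "prod_list (ys::'a::comm_monoid_mult list) = (\<Prod>i<length ys. ys!i)"
  by (induction ys) (simp_all add: prod.lessThan_Suc_shift del: prod.lessThan_Suc)

lemma ideal_sum: "finite A \<Longrightarrow> cr_ideal Q \<Longrightarrow> (\<forall>i\<in>A. f i \<in> Q) \<Longrightarrow> sum f A \<in> Q"
  by (induction A rule: finite_induct) (auto simp: cr_ideal_def)

lemma ideal_gen_ideal: "cr_ideal (ideal_gen xs)"
  unfolding cr_ideal_def ideal_gen_def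
proof (intro conjI ballI allI)
  show "(0::'a) \<in> {y. \<exists>c. y = (\<Sum>i<length xs. c i * xs ! i)}" by (rule CollectI, rule exI[of _ "\<lambda>_. 0"]) simp
next
  fix x y assume "x \<in> {y. \<exists>c. y = (\<Sum>i<length xs. c i * xs ! i)}" "y \<in> {y. \<exists>c. y = (\<Sum>i<length xs. c i * xs ! i)}"
  then obtain c d where "x = (\<Sum>i<length xs. c i * xs ! i)" "y = (\<Sum>i<length xs. d i * xs ! i)" by auto
  then have "x + y = (\<Sum>i<length xs. (c i + d i) * xs ! i)" by (simp add: sum.distrib distrib_right)
  then show "x + y \<in> {y. \<exists>c. y = (\<Sum>i<length xs. c i * xs ! i)}" unfolding mem_Collect_eq by (rule exI[where x="\<lambda>i. c i + d i"])
next
  fix r x assume "x \<in> {y. \<exists>c. y = (\<Sum>i<length xs. c i * xs ! i)}"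
  then obtain c where "x = (\<Sum>i<length xs. c i * xs ! i)" by auto
  then have "r * x = (\<Sum>i<length xs. (r * c i) * xs ! i)" by (simp add: sum_distrib_left mult.assoc)
  then show "r * x \<in> {y. \<exists>c. y = (\<Sum>i<length xs. c i * xs ! i)}" unfolding mem_Collect_eq by (rule exI[where x="\<lambda>i. r * c i"])
qed

lemma ideal_gen_mem: "j < length xs \<Longrightarrow> xs!j \<in> ideal_gen xs"
  unfolding ideal_gen_def
proof (rule CollectI, rule exI[of _ "\<lambda>i. if i = j then 1 else 0"])
  assume j: "j < length xs"
  have "\<And>i. (if i = j then 1 else 0) * xs!i = (if i = j then xs!i else 0)" by simp
  then show "xs ! j = (\<Sum>i<length xs. (if i = j then 1 else 0) * xs ! i)" using j by (simp add: sum.delta')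
qed

lemma ideal_gen_sub: "cr_ideal Q \<Longrightarrow> (\<forall>j<length xs. xs!j \<in> Q) \<Longrightarrow> ideal_gen xs \<subseteq> Q"
  unfolding ideal_gen_def
proof
  fix y assume a: "cr_ideal Q" "\<forall>j<length xs. xs ! j \<in> Q" "y \<in> {y. \<exists>c. y = (\<Sum>i<length xs. c i * xs ! i)}"
  then obtain c where "y = (\<Sum>i<length xs. c i * xs ! i)" by auto
  moreover have "(\<Sum>i<length xs. c i * xs ! i) \<in> Q"
    using a by (intro ideal_sum) (auto simp: cr_ideal_def)
  ultimately show "y \<in> Q" by simp
qed

lemma ideal_gen_Nil: "ideal_gen [] = {0}"
  unfolding ideal_gen_def by auto

lemma ideal_one: "cr_ideal I \<Longrightarrow> 1 \<in> I \<Longrightarrow> I = UNIV"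
  unfolding cr_ideal_def by (metis UNIV_eq_I mult.right_neutral)

lemma prime_exists:
  fixes J S :: "'a::comm_ring_1 set"
  assumes J: "cr_ideal J" and S1: "1 \<in> S" and Sm: "\<forall>a\<in>S. \<forall>b\<in>S. a * b \<in> S" and JS: "J \<inter> S = {}"
  shows "\<exists>Q. cr_prime_ideal Q \<and> J \<subseteq> Q \<and> Q \<inter> S = {}"
proof -
  define A where "A = {K. cr_ideal K \<and> J \<subseteq> K \<and> K \<inter> S = {}}"
  have "\<forall>C\<in>chains A. \<exists>U\<in>A. \<forall>X\<in>C. X \<subseteq> U"
  proof
    fix C assume C: "C \<in> chains A"
    show "\<exists>U\<in>A. \<forall>X\<in>C. X \<subseteq> U"
    proof (cases "C = {}")
      case True then show ?thesis using J JS by (auto simp: A_def)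
    next
      case False
      have ch: "\<forall>X\<in>C. \<forall>Y\<in>C. X \<subseteq> Y \<or> Y \<subseteq> X" and CA: "C \<subseteq> A"
        using C by (auto simp: chains_def chain_subset_def)
      have "\<Union>C \<in> A" unfolding A_def cr_ideal_def
      proof (intro CollectI conjI ballI allI)
        show "0 \<in> \<Union>C" using False CA by (auto simp: A_def cr_ideal_def)
        show "J \<subseteq> \<Union>C" using False CA by (auto simp: A_def)
        show "\<Union>C \<inter> S = {}" using CA by (auto simp: A_def)
      next
        fix x y assume "x \<in> \<Union>C" "y \<in> \<Union>C"
        then obtain X Y where "X \<in> C" "Y \<in> C" "x \<in> X" "y \<in> Y" by auto
        then have "X \<subseteq> Y \<or> Y \<subseteq> X" using ch by blast
        moreover have "cr_ideal X" "cr_ideal Y" using CA \<open>X \<in> C\<close> \<open>Y \<in> C\<close> by (auto simp: A_def)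
        ultimately have "x + y \<in> X \<or> x + y \<in> Y" using \<open>x \<in> X\<close> \<open>y \<in> Y\<close> unfolding cr_ideal_def by blast
        then show "x + y \<in> \<Union>C" using \<open>X \<in> C\<close> \<open>Y \<in> C\<close> by blast
      next
        fix r x assume "x \<in> \<Union>C"
        with CA show "r * x \<in> \<Union>C" unfolding A_def cr_ideal_def by blast
      qed
      then show ?thesis by auto
    qed
  qed
  from Zorn_Lemma2[OF this] obtain M where MA: "M \<in> A" and Mmax: "\<forall>X\<in>A. M \<subseteq> X \<longrightarrow> X = M" by blast
  have Mi: "cr_ideal M" and JM: "J \<subseteq> M" and MS: "M \<inter> S = {}" using MA by (auto simp: A_def)
  have ext: "\<exists>m\<in>M. \<exists>r. m + r * a \<in> S" if "a \<notin> M" for a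
  proof (rule ccontr)
    assume nn: "\<not> ?thesis"
    define X where "X = {y. \<exists>m\<in>M. \<exists>r. y = m + r * a}"
    have memX: "m + r * a \<in> X" if "m \<in> M" for m r unfolding X_def using that by blast
    have M0: "0 \<in> M" using Mi by (simp add: cr_ideal_def)
    have "X \<in> A" unfolding A_def cr_ideal_def
    proof (intro CollectI conjI ballI allI)
      show "0 \<in> X" using memX[OF M0, of 0] by simp
      show "J \<subseteq> X" using memX[of _ 0] JM by auto
      show "X \<inter> S = {}" unfolding X_def using nn by auto
    next
      fix x y assume "x \<in> X" "y \<in> X"
      then obtain m r m' r' where e: "x = m + r * a" "y = m' + r' * a" and mm: "m \<in> M" "m' \<in> M" unfolding X_def by auto
      have "m + m' \<in> M" using Mi mm by (simp add: cr_ideal_def)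
      moreover have "x + y = (m + m') + (r + r') * a" using e by (simp add: algebra_simps)
      ultimately show "x + y \<in> X" using memX by metis
    next
      fix s x assume "x \<in> X"
      then obtain m r where e: "x = m + r * a" and mm: "m \<in> M" unfolding X_def by auto
      have "s * m \<in> M" using Mi mm by (simp add: cr_ideal_def)
      moreover have "s * x = s * m + (s * r) * a" using e by (simp add: algebra_simps)
      ultimately show "s * x \<in> X" using memX by metis
    qed
    moreover have "M \<subseteq> X" using memX[of _ 0] by auto
    moreover have "a \<in> X" using memX[OF M0, of 1] by simp
    ultimately show False using Mmax that by auto
  qed
  have "cr_prime_ideal M" unfolding cr_prime_ideal_def
  proof (intro conjI allI impI)
    show "cr_ideal M" by fact
    show "M \<noteq> UNIV" using MS S1 by auto
  next
    fix a b assume ab: "a * b \<in> M"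
    show "a \<in> M \<or> b \<in> M"
    proof (rule ccontr)
      assume "\<not> ?thesis"
      then obtain m r m' r' where m: "m \<in> M" "m + r * a \<in> S" "m' \<in> M" "m' + r' * b \<in> S"
        using ext by meson
      have "(m + r * a) * (m' + r' * b) = ((m' + r' * b) * m + (r * a) * m') + (r * r') * (a * b)"
        by (simp add: algebra_simps)
      also have "\<dots> \<in> M" using Mi m ab unfolding cr_ideal_def by blast
      finally show False using Sm m MS by blast
    qed
  qed
  then show ?thesis using JM MS by blast
qed

lemma min_prime_exists:
  fixes J :: "'a::comm_ring_1 set"
  assumes J: "cr_ideal J" and J1: "1 \<notin> J"
  shows "\<exists>P. minimal_prime_over P J"
proof -
  obtain P0 where P0: "cr_prime_ideal P0" "J \<subseteq> P0"
    using prime_exists[OF J, of "{1}"] J1 by auto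
  define A where "A = {X. cr_prime_ideal (- X) \<and> J \<subseteq> - X}"
  have "\<forall>C\<in>chains A. \<exists>U\<in>A. \<forall>X\<in>C. X \<subseteq> U"
  proof
    fix C assume C: "C \<in> chains A"
    show "\<exists>U\<in>A. \<forall>X\<in>C. X \<subseteq> U"
    proof (cases "C = {}")
      case True
      have "- P0 \<in> A" using P0 by (simp add: A_def)
      then show ?thesis using True by blast
    next
      case False
      have ch: "\<forall>X\<in>C. \<forall>Y\<in>C. X \<subseteq> Y \<or> Y \<subseteq> X" and CA: "C \<subseteq> A"
        using C by (auto simp: chains_def chain_subset_def)
      have pr: "cr_prime_ideal (- X)" and JX: "J \<subseteq> - X" if "X \<in> C" for X
        using that CA by (auto simp: A_def)
      have "cr_prime_ideal (- \<Union>C)" unfolding cr_prime_ideal_def cr_ideal_def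
      proof (intro conjI ballI allI impI)
        show "0 \<in> - \<Union>C" using pr unfolding cr_prime_ideal_def cr_ideal_def by blast
      next
        fix x y assume "x \<in> - \<Union>C" "y \<in> - \<Union>C"
        then show "x + y \<in> - \<Union>C" using pr unfolding cr_prime_ideal_def cr_ideal_def by blast
      next
        fix r x assume "x \<in> - \<Union>C"
        then show "r * x \<in> - \<Union>C" using pr unfolding cr_prime_ideal_def cr_ideal_def by blast
      next
        obtain X where X: "X \<in> C" using False by auto
        have "1 \<notin> - X" using pr[OF X] ideal_one unfolding cr_prime_ideal_def by blast
        then show "- \<Union>C \<noteq> UNIV" using X by blast
      next
        fix a b assume ab: "a * b \<in> - \<Union>C"
        show "a \<in> - \<Union>C \<or> b \<in> - \<Union>C"
        proof (rule ccontr)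
          assume "\<not> ?thesis"
          then obtain X Y where XY: "X \<in> C" "Y \<in> C" "a \<in> X" "b \<in> Y" by auto
          then have "(a \<in> X \<and> b \<in> X \<and> X \<in> C) \<or> (a \<in> Y \<and> b \<in> Y \<and> Y \<in> C)" using ch by blast
          then obtain Z where Z: "Z \<in> C" "a \<notin> - Z" "b \<notin> - Z" by blast
          have "a * b \<in> - Z" using ab Z(1) by blast
          then show False using pr[OF Z(1)] Z unfolding cr_prime_ideal_def by blast
        qed
      qed
      moreover have "J \<subseteq> - \<Union>C" using JX by blast
      ultimately have "\<Union>C \<in> A" unfolding A_def by simp
      then show ?thesis by auto
    qed
  qed
  from Zorn_Lemma2[OF this] obtain M where MA: "M \<in> A" and Mmax: "\<forall>X\<in>A. M \<subseteq> X \<longrightarrow> X = M" by blast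
  have "minimal_prime_over (- M) J" unfolding minimal_prime_over_def
  proof (intro conjI allI impI)
    show "cr_prime_ideal (- M)" "J \<subseteq> - M" using MA by (auto simp: A_def)
  next
    fix Q assume Q: "cr_prime_ideal Q \<and> J \<subseteq> Q \<and> Q \<subseteq> - M"
    then have "- Q \<in> A" by (simp add: A_def)
    moreover have "M \<subseteq> - Q" using Q by blast
    ultimately have "- Q = M" using Mmax by blast
    then show "Q = - M" by auto
  qed
  then show ?thesis by blast
qed

lemma min_prime_power:
  fixes J :: "'a::comm_ring_1 set"
  assumes P: "minimal_prime_over P J" and J: "cr_ideal J" and x: "x \<in> P"
  shows "\<exists>u n. u \<notin> P \<and> u * x ^ n \<in> J"
proof (rule ccontr)
  assume nn: "\<not> ?thesis"
  have Pp: "cr_prime_ideal P" and JP: "J \<subseteq> P" using P by (auto simp: minimal_prime_over_def)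
  define S where "S = {y. \<exists>u n. u \<notin> P \<and> y = u * x ^ n}"
  have 1: "(1::'a) \<notin> P" using Pp ideal_one unfolding cr_prime_ideal_def by blast
  have "(1::'a) = 1 * x ^ 0" by simp
  then have S1: "1 \<in> S" unfolding S_def using 1 by blast
  have Sm: "\<forall>a\<in>S. \<forall>b\<in>S. a * b \<in> S"
  proof (intro ballI)
    fix a b assume "a \<in> S" "b \<in> S"
    then obtain u n v m where "u \<notin> P" "v \<notin> P" "a = u * x ^ n" "b = v * x ^ m" unfolding S_def by auto
    moreover have "u * v \<notin> P" using Pp calculation unfolding cr_prime_ideal_def by blast
    moreover have "a * b = (u * v) * x ^ (n + m)" using calculation by (simp add: algebra_simps power_add)
    ultimately show "a * b \<in> S" unfolding S_def by blast
  qed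
  have JS: "J \<inter> S = {}" using nn unfolding S_def by blast
  obtain Q where Q: "cr_prime_ideal Q" "J \<subseteq> Q" "Q \<inter> S = {}" using prime_exists[OF J S1 Sm JS] by blast
  have "Q \<subseteq> P"
  proof
    fix q assume "q \<in> Q"
    show "q \<in> P"
    proof (rule ccontr)
      assume "q \<notin> P"
      moreover have "q = q * x ^ 0" by simp
      ultimately have "q \<in> S" unfolding S_def by blast
      then show False using Q \<open>q \<in> Q\<close> by blast
    qed
  qed
  then have "Q = P" using P Q unfolding minimal_prime_over_def by blast
  moreover have "x = 1 * x ^ 1" by simp
  then have "x \<in> S" unfolding S_def using 1 by blast
  ultimately show False using Q x by blast
qed

lemma boundary_calc:
  fixes ys :: "'a::comm_ring_1 list"
  assumes h: "u * x ^ n = (\<Sum>j<length ys. c j * ys ! j ^ Suc k)"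
  shows "cech_top_boundary (ys @ [x]) (u * a) k"
proof -
  define l where "l = length ys"
  define Y where "Y = (\<Prod>i<l. ys ! i)"
  define Oth where "Oth j = (\<Prod>m\<in>{..<l} - {j}. ys ! m)" for j
  define b where "b j = (if j < l then a * c j * ys ! j * Oth j ^ n else 0)" for j
  have f: "prod_list (ys @ [x]) = Y * x" unfolding Y_def l_def by (simp add: prod_list_nth[of ys])
  have YO: "Y = ys ! j * Oth j" if "j < l" for j
    unfolding Y_def Oth_def using that by (simp add: prod.remove)
  have "(\<Sum>i<length (ys @ [x]). b i * (ys @ [x]) ! i ^ (k + n))
      = (\<Sum>i<l. a * c i * ys ! i * Oth i ^ n * ys ! i ^ (k + n))"
    by (simp add: l_def[symmetric] b_def nth_append)
  also have "\<dots> = (\<Sum>i<l. a * Y ^ n * (c i * ys ! i ^ Suc k))"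
  proof (rule sum.cong)
    fix i assume "i \<in> {..<l}"
    then have "Y ^ n = ys ! i ^ n * Oth i ^ n" using YO by (simp add: power_mult_distrib)
    then show "a * c i * ys ! i * Oth i ^ n * ys ! i ^ (k + n) = a * Y ^ n * (c i * ys ! i ^ Suc k)"
      by (simp add: power_add algebra_simps)
  qed simp
  also have "\<dots> = a * Y ^ n * (u * x ^ n)" using h by (simp add: sum_distrib_left l_def)
  finally have e: "(\<Sum>i<length (ys @ [x]). b i * (ys @ [x]) ! i ^ (k + n)) = a * Y ^ n * (u * x ^ n)" .
  have "prod_list (ys @ [x]) ^ 0 * (u * a * prod_list (ys @ [x]) ^ (k + n) -
      (\<Sum>i<length (ys @ [x]). b i * (ys @ [x]) ! i ^ (k + n)) * prod_list (ys @ [x]) ^ k) = 0"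
    unfolding e f by (simp add: power_add power_mult_distrib algebra_simps)
  then show ?thesis unfolding cech_top_boundary_def loc_eq_def by blast
qed

lemma prime_pow: "cr_prime_ideal Q \<Longrightarrow> a ^ Suc n \<in> Q \<Longrightarrow> a \<in> Q"
proof (induction n)
  case 0 then show ?case by simp
next
  case (Suc n)
  then have "a * a ^ Suc n \<in> Q" by simp
  then show ?case using Suc unfolding cr_prime_ideal_def by blast
qed

theorem proposition4p10:
  assumes "(0::'a::comm_ring_1) \<noteq> 1"
    and "\<forall>xs::'a list. strong_parameter_seq xs \<longrightarrow> unmixed (ideal_gen xs)"
  shows "cohen_macaulay TYPE('a)"
proof -
  have H: "regular_seq xs" if sp: "strong_parameter_seq xs" for xs :: "'a list"
    unfolding regular_seq_def
  proof (intro conjI allI impI)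
    show "ideal_gen xs \<noteq> UNIV"
    proof (cases "xs = []")
      case True then have "ideal_gen xs = {0}" by (simp add: ideal_gen_Nil)
      moreover have "(1::'a) \<notin> {0}" using assms(1) by simp
      ultimately show ?thesis by blast
    next
      case False
      then have "length xs \<in> {1..length xs}" by (cases xs) auto
      then have "parameter_seq xs" using sp unfolding strong_parameter_seq_def by fastforce
      then show ?thesis unfolding parameter_seq_def by blast
    qed
  next
    fix i r assume i: "i < length xs" and xr: "xs ! i * r \<in> ideal_gen (take i xs)"
    define ys where "ys = take i xs"
    define x where "x = xs ! i"
    define I where "I = ideal_gen ys"
    show "r \<in> ideal_gen (take i xs)"
    proof (rule ccontr)
      assume "r \<notin> ideal_gen (take i xs)"
      then have rI: "r \<notin> I" unfolding I_def ys_def .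
      have xrI: "x * r \<in> I" using xr unfolding I_def ys_def x_def .
      have len: "length ys = i" unfolding ys_def using i by simp
      have Ii: "cr_ideal I" unfolding I_def by (rule ideal_gen_ideal)
      have "strong_parameter_seq ys" unfolding strong_parameter_seq_def
      proof
        fix j assume j: "j \<in> {1..length ys}"
        then have "take j ys = take j xs" "j \<in> {1..length xs}" using len i unfolding ys_def by auto
        then show "parameter_seq (take j ys)" using sp unfolding strong_parameter_seq_def by simp
      qed
      then have um: "unmixed I" using assms(2) unfolding I_def by blast
      define Ann where "Ann = ann_quot I r"
      have Anni: "cr_ideal Ann" unfolding Ann_def ann_quot_def cr_ideal_def
      proof (intro conjI ballI allI CollectI)
        show "0 * r \<in> I" using Ii by (simp add: cr_ideal_def)
      next
        fix a b assume "a \<in> {r'. r' * r \<in> I}" "b \<in> {r'. r' * r \<in> I}"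
        then have "a * r + b * r \<in> I" using Ii unfolding cr_ideal_def by blast
        then show "(a + b) * r \<in> I" by (simp add: distrib_right)
      next
        fix s a assume "a \<in> {r'. r' * r \<in> I}"
        then have "s * (a * r) \<in> I" using Ii unfolding cr_ideal_def by blast
        then show "(s * a) * r \<in> I" by (simp add: mult.assoc)
      qed
      have "1 \<notin> Ann" using rI unfolding Ann_def ann_quot_def by simp
      then obtain P where P: "minimal_prime_over P Ann" using min_prime_exists[OF Anni] by blast
      have Pp: "cr_prime_ideal P" and AP: "Ann \<subseteq> P" using P unfolding minimal_prime_over_def by auto
      have Pi: "cr_ideal P" using Pp unfolding cr_prime_ideal_def by simp
      have "P \<in> wAss_quot I" unfolding wAss_quot_def using P Ann_def by blast
      then have PM: "P \<in> Min_quot I" using um unfolding unmixed_def by simp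
      have xP: "x \<in> P" using AP xrI unfolding Ann_def ann_quot_def by blast
      have IA: "I \<subseteq> Ann"
      proof
        fix a assume "a \<in> I"
        then have "r * a \<in> I" using Ii unfolding cr_ideal_def by blast
        then show "a \<in> Ann" unfolding Ann_def ann_quot_def by (simp add: mult.commute)
      qed
      have IP: "I \<subseteq> P" using IA AP by blast
      have yP: "ys ! j \<in> P" if "j < i" for j
        using ideal_gen_mem[of j ys] that len IP unfolding I_def by auto
      have tk: "take (Suc i) xs = ys @ [x]" unfolding ys_def x_def using i by (simp add: take_Suc_conv_app_nth)
      have "parameter_seq (ys @ [x])" using sp i unfolding strong_parameter_seq_def tk[symmetric] by auto
      moreover have "ideal_gen (ys @ [x]) \<subseteq> P"
      proof (rule ideal_gen_sub[OF Pi], intro allI impI)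
        fix j assume "j < length (ys @ [x])"
        then show "(ys @ [x]) ! j \<in> P" using yP xP len by (cases "j < i") (auto simp: nth_append)
      qed
      moreover have "\<not> cech_top_loc_nonzero (ys @ [x]) P"
        unfolding cech_top_loc_nonzero_def
      proof (intro notI, elim exE)
        fix a k assume nz: "\<forall>s. s \<notin> P \<longrightarrow> \<not> cech_top_boundary (ys @ [x]) (s * a) k"
        define Jk where "Jk = ideal_gen (pow_seq ys (Suc k))"
        have Jki: "cr_ideal Jk" unfolding Jk_def by (rule ideal_gen_ideal)
        have pl: "length (pow_seq ys (Suc k)) = i" "\<And>j. j < i \<Longrightarrow> pow_seq ys (Suc k) ! j = ys ! j ^ Suc k"
          using len by (auto simp: pow_seq_def)
        have JkP: "Jk \<subseteq> P" unfolding Jk_def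
        proof (rule ideal_gen_sub[OF Pi], intro allI impI)
          fix j assume "j < length (pow_seq ys (Suc k))"
          then have j: "j < i" using pl by simp
          have "ys ! j ^ k * ys ! j \<in> P" using yP[OF j] Pi unfolding cr_ideal_def by blast
          then show "pow_seq ys (Suc k) ! j \<in> P" using pl(2)[OF j] by (simp add: mult.commute)
        qed
        have "minimal_prime_over P Jk" unfolding minimal_prime_over_def
        proof (intro conjI allI impI)
          show "cr_prime_ideal P" "Jk \<subseteq> P" by fact+
        next
          fix Q assume Q: "cr_prime_ideal Q \<and> Jk \<subseteq> Q \<and> Q \<subseteq> P"
          have "I \<subseteq> Q" unfolding I_def
          proof (rule ideal_gen_sub)
            show "cr_ideal Q" using Q unfolding cr_prime_ideal_def by simp
          next
            show "\<forall>j<length ys. ys ! j \<in> Q"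
            proof (intro allI impI)
            fix j assume "j < length ys"
            then have j: "j < i" using len by simp
            have "pow_seq ys (Suc k) ! j \<in> Jk" unfolding Jk_def using j pl by (intro ideal_gen_mem) simp
            then have "ys ! j ^ Suc k \<in> Q" using Q pl(2)[OF j] by auto
            then show "ys ! j \<in> Q" using Q prime_pow by blast
            qed
          qed
          then have "Q \<in> Supp_quot I" unfolding Supp_quot_def using Q
            by (intro CollectI conjI exI[of _ 1]) auto
          then show "Q = P" using PM Q unfolding Min_quot_def by blast
        qed
        then obtain u n where u: "u \<notin> P" "u * x ^ n \<in> Jk" using min_prime_power[OF _ Jki xP] by blast
        then obtain c where "u * x ^ n = (\<Sum>j<length (pow_seq ys (Suc k)). c j * pow_seq ys (Suc k) ! j)"
          unfolding Jk_def ideal_gen_def by blast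
        then have "u * x ^ n = (\<Sum>j<length ys. c j * ys ! j ^ Suc k)"
          using pl len by simp
        then have "cech_top_boundary (ys @ [x]) (u * a) k" by (rule boundary_calc)
        then show False using nz u by blast
      qed
      ultimately show False using Pp unfolding parameter_seq_def by blast
    qed
  qed
  then show ?thesis unfolding cohen_macaulay_def by blast
qed

end
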